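(* Let $\mathbf{A}'$ be an $n\times d$ matrix, $k\ge1$, $\varepsilon\in(0,1)$, with maximum coverage optimum (with $k$ subsets) $\mathbf{OPT}\le C_1 k\log d/\varepsilon^2$ for a constant $C_1$. Let $b=O(k\log d/\varepsilon^2)$ and $t=O(\log(d/\varepsilon))$ (with sufficiently large constants), and for each $i\in[t]$ independently hash each row of $\mathbf{A}'$ uniformly and independently into one of $b$ buckets. Then with probability $1-1/\mathrm{poly}(d)$, every nonzero item $x$ has some $i\in[t]$ for which, in iteration $i$, $x$ is hashed to a bucket containing (1) no other large item, and (2) at most $O\!\left(\frac{d\log(1/\varepsilon)}{\varepsilon k}\right)$ nonzero entries from small items.
   Context: Item $i$ belongs to subset (column) $j$ iff $A'_{ij}\ne0$; $\mathbf{OPT}$ is the maximum over sets of $k$ columns of the number of rows with a nonzero entry in one of those columns. A row is large if it has at least $d/k$ nonzero entries and small otherwise. A nonzero item is a row of $\mathbf{A}'$ containing at least one nonzero entry. *)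

theory Defs
  imports Complex_Main "HOL-Library.FuncSet"
begin

text \<open>The matrix A' is an n x d real matrix given as a function on indices;
  rows (items) are 0..<n, columns (subsets) are 0..<d.\<close>

definition nnz_row :: "(nat \<Rightarrow> nat \<Rightarrow> real) \<Rightarrow> nat \<Rightarrow> nat \<Rightarrow> nat" where
  "nnz_row A d x = card {j \<in> {..<d}. A x j \<noteq> 0}"

definition nonzero_item :: "(nat \<Rightarrow> nat \<Rightarrow> real) \<Rightarrow> nat \<Rightarrow> nat \<Rightarrow> bool" where
  "nonzero_item A d x \<longleftrightarrow> (\<exists>j<d. A x j \<noteq> 0)"

definition coverage :: "(nat \<Rightarrow> nat \<Rightarrow> real) \<Rightarrow> nat \<Rightarrow> nat set \<Rightarrow> nat" where
  "coverage A n S = card {x \<in> {..<n}. \<exists>j\<in>S. A x j \<noteq> 0}"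

definition OPT :: "(nat \<Rightarrow> nat \<Rightarrow> real) \<Rightarrow> nat \<Rightarrow> nat \<Rightarrow> nat \<Rightarrow> nat" where
  "OPT A n d k = Max {coverage A n S | S. S \<subseteq> {..<d} \<and> card S = k}"

definition large :: "(nat \<Rightarrow> nat \<Rightarrow> real) \<Rightarrow> nat \<Rightarrow> nat \<Rightarrow> nat \<Rightarrow> bool" where
  "large A d k x \<longleftrightarrow> real (nnz_row A d x) \<ge> real d / real k"

text \<open>All t independent hash functions, each mapping rows 0..<n to buckets 0..<b;
  the uniform distribution on this finite set models independent uniform hashing.\<close>
definition hash_space :: "nat \<Rightarrow> nat \<Rightarrow> nat \<Rightarrow> (nat \<Rightarrow> nat \<Rightarrow> nat) set" where
  "hash_space n b t = PiE {..<t} (\<lambda>_. PiE {..<n} (\<lambda>_. {..<b}))"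

definition good_iteration ::
  "(nat \<Rightarrow> nat \<Rightarrow> real) \<Rightarrow> nat \<Rightarrow> nat \<Rightarrow> nat \<Rightarrow> real \<Rightarrow> (nat \<Rightarrow> nat) \<Rightarrow> nat \<Rightarrow> bool" where
  "good_iteration A n d k B h x \<longleftrightarrow>
     (\<forall>y<n. y \<noteq> x \<and> large A d k y \<longrightarrow> h y \<noteq> h x) \<and>
     real (\<Sum>y\<in>{y. y < n \<and> \<not> large A d k y \<and> h y = h x}. nnz_row A d y) \<le> B"

definition all_good ::
  "(nat \<Rightarrow> nat \<Rightarrow> real) \<Rightarrow> nat \<Rightarrow> nat \<Rightarrow> nat \<Rightarrow> real \<Rightarrow> nat \<Rightarrow> (nat \<Rightarrow> nat \<Rightarrow> nat) \<Rightarrow> bool" where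
  "all_good A n d k B t H \<longleftrightarrow>
     (\<forall>x<n. nonzero_item A d x \<longrightarrow> (\<exists>i<t. good_iteration A n d k B (H i) x))"

definition success_prob ::
  "(nat \<Rightarrow> nat \<Rightarrow> real) \<Rightarrow> nat \<Rightarrow> nat \<Rightarrow> nat \<Rightarrow> real \<Rightarrow> nat \<Rightarrow> nat \<Rightarrow> real" where
  "success_prob A n d k B b t =
     real (card {H \<in> hash_space n b t. all_good A n d k B t H}) / real (card (hash_space n b t))"

end

theory Submission
  imports Defs
begin

definition wt :: "(nat \<Rightarrow> nat \<Rightarrow> real) \<Rightarrow> nat \<Rightarrow> nat \<Rightarrow> nat \<Rightarrow> real" where
  "wt A d k y = min 1 (real k * real (nnz_row A d y) / real d)"

definition unc :: "(nat \<Rightarrow> nat \<Rightarrow> real) \<Rightarrow> nat \<Rightarrow> nat set \<Rightarrow> nat set" where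
  "unc A n S = {y. y < n \<and> \<not>(\<exists>j\<in>S. A y j \<noteq> 0)}"

lemma card_filter_sum: "finite X \<Longrightarrow> card {y\<in>X. P y} = (\<Sum>y\<in>X. if P y then 1 else 0)"
  by (simp add: sum.inter_filter[symmetric])

lemma greedy:
  assumes d: "d \<ge> 1" and k: "k \<ge> 1"
  shows "\<exists>S. S \<subseteq> {..<d} \<and> card S \<le> i \<and>
     real (coverage A n S) \<ge> real i / real k * (\<Sum>y\<in>unc A n S. wt A d k y) \<and>
     real (coverage A n S) \<ge> (\<Sum>y<n. wt A d k y) - (\<Sum>y\<in>unc A n S. wt A d k y)"
proof (induction i)
  case 0
  have "unc A n {} = {..<n}" by (auto simp: unc_def)
  then show ?case by (intro exI[of _ "{}"]) (auto simp: coverage_def)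
next
  case (Suc i)
  then obtain S where S: "S \<subseteq> {..<d}" "card S \<le> i"
    "real (coverage A n S) \<ge> real i / real k * (\<Sum>y\<in>unc A n S. wt A d k y)"
    "real (coverage A n S) \<ge> (\<Sum>y<n. wt A d k y) - (\<Sum>y\<in>unc A n S. wt A d k y)" by blast
  define U where "U = (\<Sum>y\<in>unc A n S. wt A d k y)"
  define cnt where "cnt j = card {y \<in> unc A n S. A y j \<noteq> 0}" for j
  have fin: "finite (unc A n S)" by (simp add: unc_def)
  have wle: "wt A d k y \<le> real k * real (nnz_row A d y) / real d" for y by (simp add: wt_def)
  have w1: "wt A d k y \<le> 1" for y by (simp add: wt_def)
  have w0: "wt A d k y \<ge> 0" for y by (simp add: wt_def)
  have "(\<Sum>j<d. cnt j) = (\<Sum>j<d. \<Sum>y\<in>unc A n S. if A y j \<noteq> 0 then 1 else 0)"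
    unfolding cnt_def using fin by (simp add: card_filter_sum)
  also have "\<dots> = (\<Sum>y\<in>unc A n S. \<Sum>j<d. if A y j \<noteq> 0 then 1 else 0)"
    by (rule sum.swap)
  also have "\<dots> = (\<Sum>y\<in>unc A n S. nnz_row A d y)"
    unfolding nnz_row_def by (simp only: card_filter_sum[OF finite_lessThan])
  finally have "real (\<Sum>j<d. cnt j) = real (\<Sum>y\<in>unc A n S. nnz_row A d y)" by simp
  then have sc: "(\<Sum>j<d. real (cnt j)) = (\<Sum>y\<in>unc A n S. real (nnz_row A d y))"
    by simp
  have "real d / real k * U \<le> (\<Sum>y\<in>unc A n S. real (nnz_row A d y))"
    unfolding U_def sum_distrib_left
  proof (rule sum_mono)
    fix y
    have "real d / real k * wt A d k y \<le> real d / real k * (real k * real (nnz_row A d y) / real d)"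
      using wle[of y] by (intro mult_left_mono) auto
    also have "\<dots> = real (nnz_row A d y)" using d k by (simp add: field_simps)
    finally show "real d / real k * wt A d k y \<le> real (nnz_row A d y)" .
  qed
  then have big: "real d * (U / real k) \<le> (\<Sum>j<d. real (cnt j))" using sc by (simp add: field_simps)
  have "\<exists>j<d. real (cnt j) \<ge> U / real k"
  proof (rule ccontr)
    assume "\<not> (\<exists>j<d. real (cnt j) \<ge> U / real k)"
    then have "\<forall>j<d. real (cnt j) < U / real k" by (simp add: not_le)
    then have "(\<Sum>j<d. real (cnt j)) < (\<Sum>j<d. U / real k)"
      using d by (intro sum_strict_mono) (auto simp: lessThan_empty_iff)
    then show False using big by simp
  qed
  then obtain j where j: "j < d" "real (cnt j) \<ge> U / real k" by blast
  define S' where "S' = insert j S"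
  have unc': "unc A n S' = {y \<in> unc A n S. A y j = 0}" by (auto simp: unc_def S'_def)
  have covsplit: "{x \<in> {..<n}. \<exists>j\<in>S'. A x j \<noteq> 0} =
      {x \<in> {..<n}. \<exists>j\<in>S. A x j \<noteq> 0} \<union> {y \<in> unc A n S. A y j \<noteq> 0}"
    by (auto simp: unc_def S'_def)
  have "coverage A n S' = coverage A n S + cnt j"
    unfolding coverage_def covsplit cnt_def
    by (rule card_Un_disjoint) (auto simp: unc_def)
  have Usplit: "U = (\<Sum>y\<in>unc A n S'. wt A d k y) + (\<Sum>y\<in>{y \<in> unc A n S. A y j \<noteq> 0}. wt A d k y)"
  proof -
    have "unc A n S = unc A n S' \<union> {y \<in> unc A n S. A y j \<noteq> 0}" by (auto simp: unc')
    moreover have "(\<Sum>y\<in>unc A n S' \<union> {y \<in> unc A n S. A y j \<noteq> 0}. wt A d k y) =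
       (\<Sum>y\<in>unc A n S'. wt A d k y) + (\<Sum>y\<in>{y \<in> unc A n S. A y j \<noteq> 0}. wt A d k y)"
      by (rule sum.union_disjoint) (use fin in \<open>auto simp: unc'\<close>)
    ultimately show ?thesis unfolding U_def by simp
  qed
  have "(\<Sum>y\<in>{y \<in> unc A n S. A y j \<noteq> 0}. wt A d k y) \<le> (\<Sum>y\<in>{y \<in> unc A n S. A y j \<noteq> 0}. 1)"
    by (intro sum_mono w1)
  then have dec: "(\<Sum>y\<in>{y \<in> unc A n S. A y j \<noteq> 0}. wt A d k y) \<le> real (cnt j)"
    by (simp add: cnt_def)
  have inc: "(\<Sum>y\<in>{y \<in> unc A n S. A y j \<noteq> 0}. wt A d k y) \<ge> 0" by (intro sum_nonneg w0)
  have U'le: "(\<Sum>y\<in>unc A n S'. wt A d k y) \<le> U" using Usplit inc by linarith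
  have U'nn: "(\<Sum>y\<in>unc A n S'. wt A d k y) \<ge> 0" by (intro sum_nonneg w0)
  show ?case
  proof (intro exI[of _ S'] conjI)
    show "S' \<subseteq> {..<d}" using S j by (auto simp: S'_def)
    have "finite S" using S(1) finite_subset by blast
    then show "card S' \<le> Suc i" using S(2) by (simp add: S'_def card_insert_if)
    have "real (Suc i) / real k * (\<Sum>y\<in>unc A n S'. wt A d k y) \<le> real (Suc i) / real k * U"
      using U'le by (intro mult_left_mono) auto
    also have "\<dots> = real i / real k * U + U / real k" by (simp add: add_divide_distrib algebra_simps)
    also have "\<dots> \<le> real (coverage A n S')"
      using S(3) j(2) \<open>coverage A n S' = coverage A n S + cnt j\<close> unfolding U_def by simp
    finally show "real (Suc i) / real k * (\<Sum>y\<in>unc A n S'. wt A d k y) \<le> real (coverage A n S')" .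
    show "(\<Sum>y<n. wt A d k y) - (\<Sum>y\<in>unc A n S'. wt A d k y) \<le> real (coverage A n S')"
      using S(4) Usplit dec \<open>coverage A n S' = coverage A n S + cnt j\<close> unfolding U_def by simp
  qed
qed

lemma real_card_filter: "finite X \<Longrightarrow> real (card {y\<in>X. P y}) = (\<Sum>y\<in>X. if P y then 1 else 0)"
  by (simp add: sum.inter_filter[symmetric])

lemma cov_le_OPT:
  assumes "S \<subseteq> {..<d}" "card S \<le> k" "k \<le> d"
  shows "coverage A n S \<le> OPT A n d k"
proof -
  have fS: "finite S" using assms(1) finite_subset by blast
  have "card ({..<d} - S) = d - card S" using assms(1) fS by (simp add: card_Diff_subset)
  then have "k - card S \<le> card ({..<d} - S)" using assms by simp
  then obtain T where T: "T \<subseteq> {..<d} - S" "card T = k - card S" "finite T"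
    by (rule obtain_subset_with_card_n)
  have cST: "card (S \<union> T) = k" using T fS assms(2) by (subst card_Un_disjoint) auto
  have sub: "S \<union> T \<subseteq> {..<d}" using T assms(1) by auto
  have "coverage A n S \<le> coverage A n (S \<union> T)"
    unfolding coverage_def by (intro card_mono) auto
  also have "\<dots> \<le> OPT A n d k"
    unfolding OPT_def
  proof (rule Max_ge)
    have "{coverage A n S |S. S \<subseteq> {..<d} \<and> card S = k} \<subseteq> coverage A n ` Pow {..<d}" by auto
    then show "finite {coverage A n S |S. S \<subseteq> {..<d} \<and> card S = k}"
      by (rule finite_subset) auto
    show "coverage A n (S \<union> T) \<in> {coverage A n S |S. S \<subseteq> {..<d} \<and> card S = k}"
      using sub cST by blast
  qed
  finally show ?thesis .
qed

lemma W0_le: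
  assumes "1 \<le> k" "k \<le> d"
  shows "(\<Sum>y<n. wt A d k y) \<le> 2 * real (OPT A n d k)"
proof -
  obtain S where S: "S \<subseteq> {..<d}" "card S \<le> k"
     "real (coverage A n S) \<ge> real k / real k * (\<Sum>y\<in>unc A n S. wt A d k y)"
     "real (coverage A n S) \<ge> (\<Sum>y<n. wt A d k y) - (\<Sum>y\<in>unc A n S. wt A d k y)"
    using greedy[where d=d and k=k and i=k and A=A and n=n] assms by auto
  have "coverage A n S \<le> OPT A n d k" using cov_le_OPT[OF S(1,2) assms(2)] .
  then show ?thesis using S(3,4) assms by simp
qed

lemma collide_card:
  assumes "x < n" "y < n" "y \<noteq> x"
  shows "card {h \<in> PiE {..<n} (\<lambda>_. {..<b}). h y = h x} \<le> b ^ (n - 1)"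
proof -
  let ?f = "\<lambda>h. restrict h ({..<n} - {y})"
  have "card {h \<in> PiE {..<n} (\<lambda>_. {..<b}). h y = h x} \<le> card (PiE ({..<n} - {y}) (\<lambda>_. {..<b}))"
  proof (rule card_inj_on_le)
    show "inj_on ?f {h \<in> PiE {..<n} (\<lambda>_. {..<b}). h y = h x}"
    proof (rule inj_onI)
      fix h1 h2 assume h1: "h1 \<in> {h \<in> PiE {..<n} (\<lambda>_. {..<b}). h y = h x}"
        and h2: "h2 \<in> {h \<in> PiE {..<n} (\<lambda>_. {..<b}). h y = h x}" and eq: "?f h1 = ?f h2"
      show "h1 = h2"
      proof
        fix i
        show "h1 i = h2 i"
        proof (cases "i < n")
          case True
          show ?thesis
          proof (cases "i = y")
            case True
            have "h1 x = h2 x" using fun_cong[OF eq, of x] assms by auto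
            then show ?thesis using h1 h2 True by auto
          next
            case False
            then show ?thesis using fun_cong[OF eq, of i] \<open>i < n\<close> by auto
          qed
        next
          case False
          then show ?thesis using h1 h2 by (auto simp: PiE_def extensional_def)
        qed
      qed
    qed
    show "?f ` {h \<in> PiE {..<n} (\<lambda>_. {..<b}). h y = h x} \<subseteq> PiE ({..<n} - {y}) (\<lambda>_. {..<b})"
    proof (rule image_subsetI)
      fix h assume "h \<in> {h \<in> PiE {..<n} (\<lambda>_. {..<b}). h y = h x}"
      then show "?f h \<in> PiE ({..<n} - {y}) (\<lambda>_. {..<b})"
        by (auto simp: restrict_PiE_iff PiE_iff)
    qed
    show "finite (PiE ({..<n} - {y}) (\<lambda>_. {..<b}))" by (intro finite_PiE) auto
  qed
  also have "\<dots> = b ^ (n - 1)" using assms by (simp add: card_PiE)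
  finally show ?thesis .
qed

lemma bad_card:
  assumes k: "1 \<le> k" "k \<le> d" and x: "x < n" and B: "B \<ge> 2 * real d / real k"
  shows "real (card {h \<in> PiE {..<n} (\<lambda>_. {..<b}). \<not> good_iteration A n d k B h x})
     \<le> (\<Sum>y<n. wt A d k y) * real b ^ (n - 1)"
proof -
  define H1 where "H1 = PiE {..<n} (\<lambda>_. {..<b::nat})"
  define g where "g h = (\<Sum>y\<in>{..<n} - {x}. wt A d k y * (if h y = h x then 1 else 0))" for h :: "nat \<Rightarrow> nat"
  have w1: "wt A d k y \<le> 1" for y by (simp add: wt_def)
  have w0: "wt A d k y \<ge> 0" for y by (simp add: wt_def)
  have dpos: "real d > 0" "real k > 0" using k by auto
  have g0: "g h \<ge> 0" for h unfolding g_def by (intro sum_nonneg) (auto simp: w0)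
  have wlarge: "wt A d k y = 1" if "large A d k y" for y
  proof -
    have "real d / real k \<le> real (nnz_row A d y)" using that by (simp add: large_def)
    then have "real d \<le> real k * real (nnz_row A d y)" using dpos by (simp add: field_simps)
    then have "1 \<le> real k * real (nnz_row A d y) / real d" using dpos by simp
    then show ?thesis by (simp add: wt_def)
  qed
  have wsmall: "wt A d k y = real k * real (nnz_row A d y) / real d" if "\<not> large A d k y" for y
  proof -
    have "real (nnz_row A d y) < real d / real k" using that by (simp add: large_def)
    then have "real k * real (nnz_row A d y) < real d" using dpos by (simp add: field_simps)
    then have "real k * real (nnz_row A d y) / real d < 1" using dpos by simp
    then show ?thesis by (simp add: wt_def)
  qed
  have gbad: "g h \<ge> 1" if bad: "\<not> good_iteration A n d k B h x" for h
  proof (cases "\<exists>y<n. y \<noteq> x \<and> large A d k y \<and> h y = h x")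
    case True
    then obtain y where y: "y < n" "y \<noteq> x" "large A d k y" "h y = h x" by blast
    have "wt A d k y * (if h y = h x then 1 else 0) \<le> g h"
      unfolding g_def by (rule member_le_sum) (use y in \<open>auto simp: w0\<close>)
    then show ?thesis using y wlarge by simp
  next
    case False
    define Sm where "Sm = {y. y < n \<and> \<not> large A d k y \<and> h y = h x}"
    have finSm: "finite Sm" by (simp add: Sm_def)
    have P1: "\<forall>y<n. y \<noteq> x \<and> large A d k y \<longrightarrow> h y \<noteq> h x" using False by blast
    have "\<not> real (\<Sum>y\<in>Sm. nnz_row A d y) \<le> B"
      using bad P1 unfolding good_iteration_def Sm_def by blast
    then have sumB: "real (\<Sum>y\<in>Sm. nnz_row A d y) > B" by (simp only: not_le)
    have "real (\<Sum>y\<in>Sm. nnz_row A d y) \<le> (\<Sum>y\<in>Sm - {x}. real (nnz_row A d y)) + real d / real k"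
    proof (cases "x \<in> Sm")
      case True
      have "real (\<Sum>y\<in>Sm. nnz_row A d y) = real (nnz_row A d x) + (\<Sum>y\<in>Sm - {x}. real (nnz_row A d y))"
        using True finSm by (simp add: sum.remove)
      moreover have "real (nnz_row A d x) < real d / real k" using True by (simp add: Sm_def large_def)
      ultimately show ?thesis by simp
    next
      case False
      then have "Sm - {x} = Sm" by simp
      then show ?thesis using dpos by simp
    qed
    then have gt: "(\<Sum>y\<in>Sm - {x}. real (nnz_row A d y)) > real d / real k"
      using sumB B by simp
    have "(\<Sum>y\<in>Sm - {x}. wt A d k y * (if h y = h x then 1 else 0)) \<le> g h"
      unfolding g_def
    proof (rule sum_mono2)
      show "finite ({..<n} - {x})" by simp
      show "Sm - {x} \<subseteq> {..<n} - {x}" unfolding Sm_def by blast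
      fix y show "0 \<le> wt A d k y * (if h y = h x then 1 else 0)" using w0[of y] by simp
    qed
    moreover have "(\<Sum>y\<in>Sm - {x}. wt A d k y * (if h y = h x then 1 else 0)) =
        real k / real d * (\<Sum>y\<in>Sm - {x}. real (nnz_row A d y))"
      unfolding sum_distrib_left
    proof (intro sum.cong refl)
      fix y assume "y \<in> Sm - {x}"
      then have "\<not> large A d k y" "h y = h x" unfolding Sm_def by auto
      then show "wt A d k y * (if h y = h x then 1 else 0) = real k / real d * real (nnz_row A d y)"
        using wsmall[of y] by simp
    qed
    moreover have "real k / real d * (\<Sum>y\<in>Sm - {x}. real (nnz_row A d y)) > real k / real d * (real d / real k)"
      using gt dpos by (intro mult_strict_left_mono) auto
    moreover have "real k / real d * (real d / real k) = 1" using dpos by simp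
    ultimately show ?thesis by linarith
  qed
  have finH: "finite H1" unfolding H1_def by (intro finite_PiE) auto
  have "real (card {h \<in> H1. \<not> good_iteration A n d k B h x}) = (\<Sum>h\<in>{h \<in> H1. \<not> good_iteration A n d k B h x}. 1)"
    by simp
  also have "\<dots> \<le> (\<Sum>h\<in>{h \<in> H1. \<not> good_iteration A n d k B h x}. g h)"
    by (rule sum_mono) (simp add: gbad)
  also have "\<dots> \<le> (\<Sum>h\<in>H1. g h)"
    by (rule sum_mono2) (use finH g0 in auto)
  also have "\<dots> = (\<Sum>y\<in>{..<n} - {x}. wt A d k y * (\<Sum>h\<in>H1. if h y = h x then 1 else 0))"
    unfolding g_def sum_distrib_left by (rule sum.swap)
  also have "\<dots> = (\<Sum>y\<in>{..<n} - {x}. wt A d k y * real (card {h\<in>H1. h y = h x}))"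
    using finH by (intro sum.cong refl arg_cong[where f="\<lambda>z. wt A d k _ * z"]) (simp add: real_card_filter)
  also have "\<dots> \<le> (\<Sum>y\<in>{..<n} - {x}. wt A d k y * real b ^ (n - 1))"
  proof (rule sum_mono)
    fix y assume "y \<in> {..<n} - {x}"
    then have c1: "card {h\<in>H1. h y = h x} \<le> b ^ (n - 1)"
      unfolding H1_def using collide_card[OF x] by auto
    have "real (card {h\<in>H1. h y = h x}) \<le> real b ^ (n - 1)"
      using of_nat_mono[where 'a=real, OF c1] by simp
    then show "wt A d k y * real (card {h\<in>H1. h y = h x}) \<le> wt A d k y * real b ^ (n - 1)"
      by (intro mult_left_mono w0)
  qed
  also have "\<dots> \<le> (\<Sum>y<n. wt A d k y * real b ^ (n - 1))"
    by (rule sum_mono2) (auto intro!: mult_nonneg_nonneg w0)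
  also have "\<dots> = (\<Sum>y<n. wt A d k y) * real b ^ (n - 1)" by (simp add: sum_distrib_right)
  finally show ?thesis unfolding H1_def .
qed

lemma final_num:
  fixes C1 c Kt eps N :: real and d t :: nat
  assumes C1: "C1 > 0" and c: "c > 0" and Kt: "Kt * ln 2 \<ge> 2 + c + max 0 (log 2 (2*C1))"
    and d: "2 \<le> d" and e: "0 < eps" "eps < 1" and t: "real t \<ge> Kt * ln (real d / eps)"
    and N0: "N \<ge> 0" and N: "N \<le> 2 * C1 * real d * ln (real d) / eps^2"
  shows "N * (1/2)^t \<le> 1 / real d powr c"
proof (cases "N = 0")
  case True
  then show ?thesis by simp
next
  case False
  then have Np: "N > 0" using N0 by simp
  define l where "l = ln (real d)"
  define m where "m = ln (1 / eps)"
  define M where "M = max 0 (log 2 (2*C1))"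
  define a where "a = Kt * ln 2"
  have dpos: "real d > 0" using d by simp
  have l2: "l \<ge> ln 2" unfolding l_def using d by simp
  have ln2: "ln (2::real) > 0" by simp
  have lle: "l \<le> real d" unfolding l_def using dpos ln_le_minus_one[of "real d"] by simp
  have m0: "m > 0" unfolding m_def using e by simp
  have lnde: "ln (real d / eps) = l + m" unfolding l_def m_def using dpos e
    by (simp add: ln_div)
  have a: "a \<ge> 2 + c + M" using Kt unfolding a_def M_def by simp
  have M0: "M \<ge> 0" unfolding M_def by simp
  have Mln: "M * ln 2 \<ge> ln (2 * C1)"
  proof -
    have "log 2 (2*C1) * ln 2 = ln (2*C1)" by (simp add: log_def)
    moreover have "M \<ge> log 2 (2*C1)" unfolding M_def by simp
    ultimately show ?thesis using ln2 by (metis mult_right_mono less_imp_le)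
  qed
  have "M * l \<ge> M * ln 2" using M0 l2 by (intro mult_left_mono)
  then have Ml: "M * l \<ge> ln (2*C1)" using Mln by linarith
  have tl: "real t * ln 2 \<ge> a * (l + m)"
    using t lnde mult_right_mono[OF t less_imp_le[OF ln2]] unfolding a_def
    by (simp add: algebra_simps)
  have "a * l \<ge> (2 + c + M) * l" using a l2 ln2 by (intro mult_right_mono) linarith+
  moreover have "a * m \<ge> 2 * m" using a c M0 m0 by (intro mult_right_mono) auto
  ultimately have key: "real t * ln 2 \<ge> 2 * l + c * l + ln (2*C1) + 2 * m"
    using tl Ml by (simp add: algebra_simps)
  have "N \<le> 2 * C1 * real d * real d / eps^2"
  proof -
    have "2 * C1 * real d * ln (real d) \<le> 2 * C1 * real d * real d"
      using lle C1 dpos unfolding l_def by (intro mult_left_mono) auto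
    then have "2 * C1 * real d * ln (real d) / eps^2 \<le> 2 * C1 * real d * real d / eps^2"
      using e by (intro divide_right_mono) auto
    then show ?thesis using N by linarith
  qed
  then have "ln N \<le> ln (2 * C1 * real d * real d / eps^2)" using Np by simp
  also have "\<dots> = ln (2*C1) + 2 * l + 2 * m"
    using C1 dpos e unfolding l_def m_def
    by (simp add: ln_mult ln_div power2_eq_square ln_inverse divide_inverse)
  finally have lnN: "ln N \<le> ln (2*C1) + 2 * l + 2 * m" .
  have "ln (N * (1/2)^t) = ln N - real t * ln 2"
    using Np by (simp add: ln_mult ln_realpow ln_div)
  also have "\<dots> \<le> - c * l" using lnN key by linarith
  also have "\<dots> = ln (1 / real d powr c)" unfolding l_def using dpos
    by (simp add: ln_div ln_powr)
  finally show ?thesis using Np dpos by simp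
qed

lemma main_bound:
  fixes C1 c Kb Kt eps :: real
  assumes C1: "C1 > 0" and c: "c > 0"
    and Kb: "Kb \<ge> 4*C1" and Kt: "Kt * ln 2 \<ge> 2 + c + max 0 (log 2 (2*C1))"
    and d: "2 \<le> d" and k: "1 \<le> k" "k \<le> d" and e: "0 < eps" "eps < 1"
    and opt: "real (OPT A n d k) \<le> C1 * real k * ln (real d) / eps\<^sup>2"
  shows "success_prob A n d k (2 * real d * max 1 (ln (1 / eps)) / (eps * real k))
         (nat \<lceil>Kb * real k * ln (real d) / eps\<^sup>2\<rceil>)
         (nat \<lceil>Kt * ln (real d / eps)\<rceil>) \<ge> 1 - 1 / real d powr c"
proof -
  define L where "L = ln (real d)"
  define b where "b = nat \<lceil>Kb * real k * L / eps\<^sup>2\<rceil>"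
  define t where "t = nat \<lceil>Kt * ln (real d / eps)\<rceil>"
  define B where "B = 2 * real d * max 1 (ln (1 / eps)) / (eps * real k)"
  have dpos: "real d > 0" "real k > 0" using d k by auto
  have Lpos: "L > 0" unfolding L_def using d by simp
  have e2: "eps^2 > 0" using e by simp
  have bge: "real b \<ge> Kb * real k * L / eps\<^sup>2" unfolding b_def by (rule real_nat_ceiling_ge)
  have tge: "real t \<ge> Kt * ln (real d / eps)" unfolding t_def by (rule real_nat_ceiling_ge)
  have Kbpos: "Kb > 0" using Kb C1 by simp
  have "Kb * real k * L / eps\<^sup>2 > 0" using Kbpos dpos Lpos e2 by simp
  then have bpos: "b \<ge> 1" using bge by linarith
  define W0 where "W0 = (\<Sum>y<n. wt A d k y)"
  have w0: "wt A d k y \<ge> 0" for y by (simp add: wt_def)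
  have W0le: "W0 \<le> 2 * (C1 * real k * L / eps\<^sup>2)"
    using W0_le[OF k, of A n] opt unfolding W0_def L_def by linarith
  have "2 * (C1 * real k * L / eps\<^sup>2) \<le> (Kb / 2) * (real k * L / eps\<^sup>2)"
  proof -
    have "2 * C1 \<le> Kb / 2" using Kb by simp
    then have "(2 * C1) * (real k * L / eps\<^sup>2) \<le> (Kb / 2) * (real k * L / eps\<^sup>2)"
      using dpos Lpos e2 by (intro mult_right_mono) auto
    then show ?thesis by simp
  qed
  also have "\<dots> \<le> real b / 2" using bge by simp
  finally have Wb: "W0 \<le> real b / 2" using W0le by linarith
  have Bge: "B \<ge> 2 * real d / real k"
  proof -
    have "1 / eps \<ge> 1" using e by simp
    then have "max 1 (ln (1 / eps)) / eps \<ge> 1" using e by (simp add: field_simps)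
    then have "(2 * real d / real k) * 1 \<le> (2 * real d / real k) * (max 1 (ln (1 / eps)) / eps)"
      using dpos by (intro mult_left_mono) auto
    also have "\<dots> = B" unfolding B_def by (simp add: field_simps)
    finally show ?thesis by simp
  qed
  define H1 where "H1 = PiE {..<n} (\<lambda>_. {..<b})"
  define HS where "HS = hash_space n b t"
  have HS_eq: "HS = PiE {..<t} (\<lambda>_. H1)" unfolding HS_def hash_space_def H1_def by simp
  define Bad where "Bad x = {h \<in> H1. \<not> good_iteration A n d k B h x}" for x
  define NZ where "NZ = {x. x < n \<and> nonzero_item A d x}"
  have finH1: "finite H1" unfolding H1_def by (intro finite_PiE) auto
  have finHS: "finite HS" unfolding HS_eq by (intro finite_PiE finH1) auto
  have cardH1: "card H1 = b ^ n" unfolding H1_def by (simp add: card_PiE)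
  have cardHS: "card HS = (b ^ n) ^ t" unfolding HS_eq using cardH1 by (simp add: card_PiE)
  have badx: "real (card (Bad x)) \<le> real (b ^ n) / 2" if x: "x < n" for x
  proof -
    have "real (card (Bad x)) \<le> W0 * real b ^ (n - 1)"
      unfolding Bad_def H1_def W0_def using bad_card[OF k x Bge] .
    also have "\<dots> \<le> (real b / 2) * real b ^ (n - 1)" using Wb by (intro mult_right_mono) auto
    also have "\<dots> = real (b ^ n) / 2"
    proof -
      have "n = Suc (n - 1)" using x by simp
      then have "real b ^ n = real b * real b ^ (n - 1)" by (metis power_Suc)
      then show ?thesis by simp
    qed
    finally show ?thesis .
  qed
  define Fail where "Fail = {H \<in> HS. \<not> all_good A n d k B t H}"
  define Good where "Good = {H \<in> HS. all_good A n d k B t H}"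
  have fail_sub: "Fail \<subseteq> (\<Union>x\<in>NZ. PiE {..<t} (\<lambda>_. Bad x))"
  proof
    fix H assume "H \<in> Fail"
    then have H: "H \<in> HS" "\<not> all_good A n d k B t H" unfolding Fail_def by auto
    then obtain x where x: "x < n" "nonzero_item A d x" "\<forall>i<t. \<not> good_iteration A n d k B (H i) x"
      unfolding all_good_def by auto
    have "H \<in> PiE {..<t} (\<lambda>_. Bad x)"
      using H(1) x(3) unfolding HS_eq Bad_def by (auto simp: PiE_iff)
    then show "H \<in> (\<Union>x\<in>NZ. PiE {..<t} (\<lambda>_. Bad x))" using x unfolding NZ_def by auto
  qed
  have finNZ: "finite NZ" unfolding NZ_def by simp
  have finBad: "finite (Bad x)" for x unfolding Bad_def using finH1 by simp
  have finU: "finite (\<Union>x\<in>NZ. PiE {..<t} (\<lambda>_. Bad x))"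
    using finNZ finBad by (intro finite_UN_I finite_PiE) auto
  have "card Fail \<le> card (\<Union>x\<in>NZ. PiE {..<t} (\<lambda>_. Bad x))"
    by (rule card_mono[OF finU fail_sub])
  also have "\<dots> \<le> (\<Sum>x\<in>NZ. card (PiE {..<t} (\<lambda>_. Bad x)))" using finNZ by (rule card_UN_le)
  also have "\<dots> = (\<Sum>x\<in>NZ. card (Bad x) ^ t)" by (simp add: card_PiE)
  finally have "real (card Fail) \<le> real (\<Sum>x\<in>NZ. card (Bad x) ^ t)" by (rule of_nat_mono)
  also have "\<dots> = (\<Sum>x\<in>NZ. real (card (Bad x)) ^ t)" by simp
  also have "\<dots> \<le> (\<Sum>x\<in>NZ. (real (b ^ n) / 2) ^ t)"
  proof (rule sum_mono)
    fix x assume "x \<in> NZ"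
    then have "x < n" by (simp add: NZ_def)
    then show "real (card (Bad x)) ^ t \<le> (real (b ^ n) / 2) ^ t"
      using badx by (intro power_mono) auto
  qed
  also have "\<dots> = real (card NZ) * (real (b ^ n) / 2) ^ t" by simp
  also have "(real (b ^ n) / 2) ^ t = (1/2)^t * real (card HS)"
    unfolding cardHS by (simp add: power_divide)
  finally have failb: "real (card Fail) \<le> real (card NZ) * (1/2)^t * real (card HS)"
    by (simp add: mult.assoc)
  have cardHSpos: "real (card HS) > 0" using cardHS bpos by simp
  have HSU: "HS = Good \<union> Fail" unfolding Good_def Fail_def by auto
  have "card (Good \<union> Fail) = card Good + card Fail"
    by (rule card_Un_disjoint) (use finHS in \<open>auto simp: Good_def Fail_def\<close>)
  then have cHS: "real (card HS) = real (card Good) + real (card Fail)" using HSU by simp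
  have "success_prob A n d k B b t = real (card Good) / real (card HS)"
    unfolding success_prob_def Good_def HS_def by simp
  also have "\<dots> = 1 - real (card Fail) / real (card HS)"
    using cHS cardHSpos by (simp add: field_simps)
  finally have sp: "success_prob A n d k B b t = 1 - real (card Fail) / real (card HS)" .
  have "real (card Fail) / real (card HS) \<le> real (card NZ) * (1/2)^t"
    using failb cardHSpos by (simp add: pos_divide_le_eq)
  moreover have "real (card NZ) * (1/2)^t \<le> 1 / real d powr c"
  proof (rule final_num[OF C1 c Kt d e tge])
    show "real (card NZ) \<ge> 0" by simp
    have wnz: "real k / real d \<le> wt A d k x" if "x \<in> NZ" for x
    proof -
      have "{j \<in> {..<d}. A x j \<noteq> 0} \<noteq> {}" using that unfolding NZ_def nonzero_item_def by auto
      then have "nnz_row A d x \<ge> 1" unfolding nnz_row_def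
        by (simp add: Suc_le_eq card_gt_0_iff)
      then have "real k / real d \<le> real k * real (nnz_row A d x) / real d"
        using dpos by (intro divide_right_mono) auto
      moreover have "real k / real d \<le> 1" using k dpos by simp
      ultimately show ?thesis by (simp add: wt_def)
    qed
    have "real (card NZ) * (real k / real d) = (\<Sum>x\<in>NZ. real k / real d)" by simp
    also have "\<dots> \<le> (\<Sum>x\<in>NZ. wt A d k x)" by (intro sum_mono wnz)
    also have "\<dots> \<le> W0" unfolding W0_def by (rule sum_mono2) (auto simp: NZ_def w0)
    finally have "real (card NZ) * (real k / real d) \<le> 2 * (C1 * real k * L / eps\<^sup>2)"
      using W0le by linarith
    then have "real (card NZ) * real k \<le> 2 * (C1 * real k * L / eps\<^sup>2) * real d"
      using dpos by (simp add: field_simps)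
    then have "real k * real (card NZ) \<le> real k * (2 * C1 * real d * L / eps\<^sup>2)"
      by (simp add: algebra_simps)
    then have "real (card NZ) \<le> 2 * C1 * real d * L / eps\<^sup>2"
      using dpos(2) by (rule mult_left_le_imp_le)
    then show "real (card NZ) \<le> 2 * C1 * real d * ln (real d) / eps\<^sup>2"
      unfolding L_def .
  qed
  ultimately have "success_prob A n d k B b t \<ge> 1 - 1 / real d powr c" using sp by linarith
  then show ?thesis unfolding B_def b_def t_def L_def .
qed

theorem lemma10:
  fixes C1 c :: real
  assumes "C1 > 0" and "c > 0"
  shows "\<exists>C3>0. \<exists>K0. \<forall>Kb Kt. Kb \<ge> K0 \<and> Kt \<ge> K0 \<longrightarrow>
    (\<forall>(A :: nat \<Rightarrow> nat \<Rightarrow> real) (n::nat) (d::nat) (k::nat) (\<epsilon>::real).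
       2 \<le> d \<longrightarrow> 1 \<le> k \<longrightarrow> k \<le> d \<longrightarrow> 0 < \<epsilon> \<longrightarrow> \<epsilon> < 1 \<longrightarrow>
       real (OPT A n d k) \<le> C1 * real k * ln (real d) / \<epsilon>\<^sup>2 \<longrightarrow>
       success_prob A n d k
         (C3 * real d * max 1 (ln (1 / \<epsilon>)) / (\<epsilon> * real k))
         (nat \<lceil>Kb * real k * ln (real d) / \<epsilon>\<^sup>2\<rceil>)
         (nat \<lceil>Kt * ln (real d / \<epsilon>)\<rceil>)
       \<ge> 1 - 1 / real d powr c)"
proof -
  define K0 where "K0 = max (4*C1) ((2 + c + max 0 (log 2 (2*C1))) / ln 2)"
  have main: "success_prob A n d k
         (2 * real d * max 1 (ln (1 / \<epsilon>)) / (\<epsilon> * real k))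
         (nat \<lceil>Kb * real k * ln (real d) / \<epsilon>\<^sup>2\<rceil>)
         (nat \<lceil>Kt * ln (real d / \<epsilon>)\<rceil>)
       \<ge> 1 - 1 / real d powr c"
    if "Kb \<ge> K0" "Kt \<ge> K0" "2 \<le> d" "1 \<le> k" "k \<le> d" "0 < \<epsilon>" "\<epsilon> < 1"
       "real (OPT A n d k) \<le> C1 * real k * ln (real d) / \<epsilon>\<^sup>2"
    for Kb Kt A n d k \<epsilon>
  proof -
    have kb: "Kb \<ge> 4 * C1" using that(1) unfolding K0_def by simp
    have "Kt \<ge> (2 + c + max 0 (log 2 (2*C1))) / ln 2" using that(2) unfolding K0_def by simp
    then have kt: "Kt * ln 2 \<ge> 2 + c + max 0 (log 2 (2*C1))" by (simp add: pos_divide_le_eq)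
    show ?thesis by (rule main_bound[OF assms kb kt that(3-8)])
  qed
  show ?thesis
    apply (rule exI[of _ "2::real"])
    apply (rule conjI)
     apply simp
    apply (rule exI[of _ K0])
    apply (intro allI impI)
    apply (elim conjE)
    apply (rule main; assumption)
    done
qed

end
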